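(* Let $d\ge0$ and let $$f=\sum_{i+j\le d}\frac{d!}{i!\,j!\,(d-(i+j))!}\,c_{i,j}\,u_3^{d-(i+j)}u_1^{i}u_2^{j},\qquad c_{i,j}\in\mathbb K[A],$$ be an irreducible contravariant of order $d$ of the ternary form of degree $n$. Then: (i) the vector space $C_d=\langle c_{i,j}: i+j\le d\rangle$ is an irreducible $\mathfrak{sl}_3$-submodule of $\mathbb K[A]$ isomorphic to $\Gamma_{0,d}$; (ii) $c_{0,0}$ is a highest vector of $C_d$, of weight $[0,d]$; (iii) $f=\sum_{i+j\le d}\frac{(-1)^{i+j}}{i!\,j!}\,\hat D_2^{j}\hat D_3^{i}(c_{0,0})\,u_3^{d-(i+j)}u_1^{i}u_2^{j}$.
   Context: $\mathbb K$ is a field of characteristic $0$, $n\ge1$, $\mathbb K[A]=\mathbb K[a_{i,j}: i,j\ge0,\ i+j\le n]$ is the coordinate ring of the space of ternary forms $\sum_{i+j\le n}\frac{n!}{i!j!(n-i-j)!}a_{i,j}x_1^{n-i-j}x_2^ix_3^j$. $\mathfrak{sl}_3$ acts by derivations on $\mathbb K[A,u_1,u_2,u_3]$; the operators for $E_{12},E_{23},E_{13},E_{21},E_{32},E_{31},E_{11}-E_{22},E_{22}-E_{33}$ are $D_1,D_2,D_3,\hat D_1,\hat D_2,\hat D_3,E_1,E_2$. On generators of $\mathbb K[A]$ (with $a_{i,j}=0$ if an index is negative or $i+j>n$): $D_1(a_{i,j})=i a_{i-1,j}$, $D_2(a_{i,j})=j a_{i+1,j-1}$, $D_3(a_{i,j})=j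 a_{i,j-1}$, $\hat D_1(a_{i,j})=(n-i-j)a_{i+1,j}$, $\hat D_2(a_{i,j})=i a_{i-1,j+1}$, $\hat D_3(a_{i,j})=(n-i-j)a_{i,j+1}$, $E_1(a_{i,j})=(n-2i-j)a_{i,j}$, $E_2(a_{i,j})=(i-j)a_{i,j}$. The variables $u_1,u_2,u_3$ span the dual of the standard module $\langle x_1,x_2,x_3\rangle$ (on which $D_1=-x_2\partial_{x_1}$, $D_2=-x_3\partial_{x_2}$, $D_3=-x_3\partial_{x_1}$, $\hat D_1=-x_1\partial_{x_2}$, $\hat D_2=-x_2\partial_{x_3}$, $\hat D_3=-x_1\partial_{x_3}$), so that $x_1u_1+x_2u_2+x_3u_3$ is invariant; explicitly $D_1=u_1\partial_{u_2}$, $D_2=u_2\partial_{u_3}$, $D_3=u_1\partial_{u_3}$, $\hat D_1=u_2\partial_{u_1}$, $\hat D_2=u_3\partial_{u_2}$, $\hat D_3=u_3\partial_{u_1}$, $E_1=u_1\partial_{u_1}-u_2\partial_{u_2}$, $E_2=u_2\partial_{u_2}-u_3\partial_{u_3}$ on the $u$'s. A contravariant of order $d$ is an element of $\mathbb K[A,u_1,u_2,u_3]$ homogeneous of degree $d$ in the $u$'s and $SL_3$-invariant (equivalently annihilated by all these derivations); "irreducible" is used in the classical sense (nonzero, not a polynomial in contravariants of smaller degree). $\Gamma_{m_1,m_2}$ denotes the irreducible finite-dimensional $\mathfrak{sl}_3$-module of highest weight $[m_1,m_2]$, i.e. generated by a nonzero vector $v$ (a highest vector) with $D_1v=D_2v=D_3v=0$,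 $E_1v=m_1v$, $E_2v=m_2v$. *)

theory Defs
  imports Complex_Main "HOL-Library.Poly_Mapping"
begin

text \<open>Variables: Av i j stands for a_{i,j} (only i+j \<le> n is used), U k for u_k (k = 1,2,3).\<close>

datatype var = Av nat nat | U nat

type_synonym 'k pol = "(var \<Rightarrow>\<^sub>0 nat) \<Rightarrow>\<^sub>0 'k"

definition Var :: "var \<Rightarrow> 'k::comm_ring_1 pol" where
  "Var v = Poly_Mapping.single (Poly_Mapping.single v 1) 1"

definition const :: "'k::comm_ring_1 \<Rightarrow> 'k pol" where
  "const c = Poly_Mapping.single 0 c"

definition sc :: "'k::comm_ring_1 \<Rightarrow> 'k pol \<Rightarrow> 'k pol" where
  "sc c p = const c * p"

definition acoef :: "nat \<Rightarrow> nat \<Rightarrow> nat \<Rightarrow> 'k::comm_ring_1 pol" where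
  "acoef n i j = (if i + j \<le> n then Var (Av i j) else 0)"

definition uu :: "nat \<Rightarrow> 'k::comm_ring_1 pol" where
  "uu k = Var (U k)"

definition Avars :: "nat \<Rightarrow> var set" where
  "Avars n = {Av i j | i j. i + j \<le> n}"

definition Uvars :: "var set" where
  "Uvars = {U 1, U 2, U 3}"

definition vars :: "'k::comm_ring_1 pol \<Rightarrow> var set" where
  "vars p = (\<Union>m \<in> Poly_Mapping.keys p. Poly_Mapping.keys (m :: var \<Rightarrow>\<^sub>0 nat))"

definition KA :: "nat \<Rightarrow> 'k::comm_ring_1 pol set" where
  "KA n = {p. vars p \<subseteq> Avars n}"

definition KAU :: "nat \<Rightarrow> 'k::comm_ring_1 pol set" where
  "KAU n = {p. vars p \<subseteq> Avars n \<union> Uvars}"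

definition pderiv_var :: "var \<Rightarrow> 'k::comm_ring_1 pol \<Rightarrow> 'k pol" where
  "pderiv_var v p =
     (\<Sum>m \<in> Poly_Mapping.keys p. Poly_Mapping.single (Poly_Mapping.update v (Poly_Mapping.lookup m v - 1) m)
                        (of_nat (Poly_Mapping.lookup m v) * Poly_Mapping.lookup p m))"

definition der :: "(var \<Rightarrow> 'k::comm_ring_1 pol) \<Rightarrow> 'k pol \<Rightarrow> 'k pol" where
  "der \<delta> p = (\<Sum>v \<in> vars p. pderiv_var v p * \<delta> v)"

text \<open>Values of the eight operators on the generators (n = degree of the ternary form).\<close>

definition gD1 :: "nat \<Rightarrow> var \<Rightarrow> 'k::comm_ring_1 pol" where
  "gD1 n v = (case v of
      Av i j \<Rightarrow> if i + j \<le> n then of_nat i * acoef n (i - 1) j else 0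
    | U k \<Rightarrow> if k = 2 then uu 1 else 0)"

definition gD2 :: "nat \<Rightarrow> var \<Rightarrow> 'k::comm_ring_1 pol" where
  "gD2 n v = (case v of
      Av i j \<Rightarrow> if i + j \<le> n then of_nat j * acoef n (i + 1) (j - 1) else 0
    | U k \<Rightarrow> if k = 3 then uu 2 else 0)"

definition gD3 :: "nat \<Rightarrow> var \<Rightarrow> 'k::comm_ring_1 pol" where
  "gD3 n v = (case v of
      Av i j \<Rightarrow> if i + j \<le> n then of_nat j * acoef n i (j - 1) else 0
    | U k \<Rightarrow> if k = 3 then uu 1 else 0)"

definition gDh1 :: "nat \<Rightarrow> var \<Rightarrow> 'k::comm_ring_1 pol" where
  "gDh1 n v = (case v of
      Av i j \<Rightarrow> if i + j \<le> n then of_nat (n - i - j) * acoef n (i + 1) j else 0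
    | U k \<Rightarrow> if k = 1 then uu 2 else 0)"

definition gDh2 :: "nat \<Rightarrow> var \<Rightarrow> 'k::comm_ring_1 pol" where
  "gDh2 n v = (case v of
      Av i j \<Rightarrow> if i + j \<le> n then of_nat i * acoef n (i - 1) (j + 1) else 0
    | U k \<Rightarrow> if k = 2 then uu 3 else 0)"

definition gDh3 :: "nat \<Rightarrow> var \<Rightarrow> 'k::comm_ring_1 pol" where
  "gDh3 n v = (case v of
      Av i j \<Rightarrow> if i + j \<le> n then of_nat (n - i - j) * acoef n i (j + 1) else 0
    | U k \<Rightarrow> if k = 1 then uu 3 else 0)"

definition gE1 :: "nat \<Rightarrow> var \<Rightarrow> 'k::comm_ring_1 pol" where
  "gE1 n v = (case v of
      Av i j \<Rightarrow> if i + j \<le> n then of_int (int n - 2 * int i - int j) * acoef n i j else 0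
    | U k \<Rightarrow> if k = 1 then uu 1 else if k = 2 then - uu 2 else 0)"

definition gE2 :: "nat \<Rightarrow> var \<Rightarrow> 'k::comm_ring_1 pol" where
  "gE2 n v = (case v of
      Av i j \<Rightarrow> if i + j \<le> n then of_int (int i - int j) * acoef n i j else 0
    | U k \<Rightarrow> if k = 2 then uu 2 else if k = 3 then - uu 3 else 0)"

definition D1 :: "nat \<Rightarrow> 'k::comm_ring_1 pol \<Rightarrow> 'k pol" where "D1 n = der (gD1 n)"
definition D2 :: "nat \<Rightarrow> 'k::comm_ring_1 pol \<Rightarrow> 'k pol" where "D2 n = der (gD2 n)"
definition D3 :: "nat \<Rightarrow> 'k::comm_ring_1 pol \<Rightarrow> 'k pol" where "D3 n = der (gD3 n)"
definition Dh1 :: "nat \<Rightarrow> 'k::comm_ring_1 pol \<Rightarrow> 'k pol" where "Dh1 n = der (gDh1 n)"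
definition Dh2 :: "nat \<Rightarrow> 'k::comm_ring_1 pol \<Rightarrow> 'k pol" where "Dh2 n = der (gDh2 n)"
definition Dh3 :: "nat \<Rightarrow> 'k::comm_ring_1 pol \<Rightarrow> 'k pol" where "Dh3 n = der (gDh3 n)"
definition E1 :: "nat \<Rightarrow> 'k::comm_ring_1 pol \<Rightarrow> 'k pol" where "E1 n = der (gE1 n)"
definition E2 :: "nat \<Rightarrow> 'k::comm_ring_1 pol \<Rightarrow> 'k pol" where "E2 n = der (gE2 n)"

definition sl3_ops :: "nat \<Rightarrow> ('k::comm_ring_1 pol \<Rightarrow> 'k pol) set" where
  "sl3_ops n = {D1 n, D2 n, D3 n, Dh1 n, Dh2 n, Dh3 n, E1 n, E2 n}"

definition udeg :: "(var \<Rightarrow>\<^sub>0 nat) \<Rightarrow> nat" where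
  "udeg m = Poly_Mapping.lookup m (U 1) + Poly_Mapping.lookup m (U 2) + Poly_Mapping.lookup m (U 3)"

definition contravariant :: "nat \<Rightarrow> nat \<Rightarrow> 'k::comm_ring_1 pol \<Rightarrow> bool" where
  "contravariant n d f \<longleftrightarrow> f \<in> KAU n \<and> (\<forall>m \<in> Poly_Mapping.keys f. udeg m = d)
      \<and> (\<forall>D \<in> sl3_ops n. D f = 0)"

definition Adeg_mon :: "nat \<Rightarrow> (var \<Rightarrow>\<^sub>0 nat) \<Rightarrow> nat" where
  "Adeg_mon n m = (\<Sum>v \<in> Avars n. Poly_Mapping.lookup m v)"

definition Adeg :: "nat \<Rightarrow> 'k::comm_ring_1 pol \<Rightarrow> nat" where
  "Adeg n p = Max (insert 0 (Adeg_mon n ` Poly_Mapping.keys p))"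

inductive_set alg_gen :: "'k::comm_ring_1 pol set \<Rightarrow> 'k pol set" for G where
  gen: "g \<in> G \<Longrightarrow> g \<in> alg_gen G"
| const: "const c \<in> alg_gen G"
| add: "p \<in> alg_gen G \<Longrightarrow> q \<in> alg_gen G \<Longrightarrow> p + q \<in> alg_gen G"
| mult: "p \<in> alg_gen G \<Longrightarrow> q \<in> alg_gen G \<Longrightarrow> p * q \<in> alg_gen G"

definition irreducible_contravariant :: "nat \<Rightarrow> nat \<Rightarrow> 'k::comm_ring_1 pol \<Rightarrow> bool" where
  "irreducible_contravariant n d f \<longleftrightarrow> contravariant n d f \<and> f \<noteq> 0 \<and>
     f \<notin> alg_gen {g. \<exists>e. contravariant n e g \<and> Adeg n g < Adeg n f}"

definition kspan :: "'k::comm_ring_1 pol set \<Rightarrow> 'k pol set" where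
  "kspan S = {p. \<exists>F l. finite F \<and> F \<subseteq> S \<and> p = (\<Sum>q \<in> F. sc (l q) q)}"

definition subspace_pol :: "'k::comm_ring_1 pol set \<Rightarrow> bool" where
  "subspace_pol V \<longleftrightarrow> 0 \<in> V \<and> (\<forall>p \<in> V. \<forall>q \<in> V. p + q \<in> V) \<and> (\<forall>c. \<forall>p \<in> V. sc c p \<in> V)"

definition sl3_submodule :: "nat \<Rightarrow> 'k::comm_ring_1 pol set \<Rightarrow> bool" where
  "sl3_submodule n V \<longleftrightarrow> V \<subseteq> KA n \<and> subspace_pol V \<and> (\<forall>D \<in> sl3_ops n. \<forall>p \<in> V. D p \<in> V)"

definition irreducible_sl3_submodule :: "nat \<Rightarrow> 'k::comm_ring_1 pol set \<Rightarrow> bool" where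
  "irreducible_sl3_submodule n V \<longleftrightarrow> sl3_submodule n V \<and> V \<noteq> {0} \<and>
     (\<forall>W. W \<subseteq> V \<longrightarrow> sl3_submodule n W \<longrightarrow> W = {0} \<or> W = V)"

definition highest_vector :: "nat \<Rightarrow> nat \<Rightarrow> nat \<Rightarrow> 'k::comm_ring_1 pol \<Rightarrow> bool" where
  "highest_vector n m1 m2 v \<longleftrightarrow> v \<noteq> 0 \<and> D1 n v = 0 \<and> D2 n v = 0 \<and> D3 n v = 0 \<and>
     E1 n v = sc (of_nat m1) v \<and> E2 n v = sc (of_nat m2) v"

text \<open>V is (isomorphic to) Gamma_{m1,m2}: a finite-dimensional irreducible sl3-module
  generated by a highest vector of weight [m1,m2] (in an irreducible module every nonzero
  vector generates it).\<close>
definition is_Gamma :: "nat \<Rightarrow> nat \<Rightarrow> nat \<Rightarrow> 'k::comm_ring_1 pol set \<Rightarrow> bool" where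
  "is_Gamma n m1 m2 V \<longleftrightarrow> (\<exists>B. finite B \<and> V = kspan B) \<and> irreducible_sl3_submodule n V \<and>
     (\<exists>v \<in> V. highest_vector n m1 m2 v)"

end

theory Submission
  imports Defs
begin


lemma poly_expand:
  "(p::'a \<Rightarrow>\<^sub>0 'b::comm_monoid_add) = (\<Sum>m\<in>Poly_Mapping.keys p. Poly_Mapping.single m (Poly_Mapping.lookup p m))"
  by (rule poly_mapping_eqI) (simp add: lookup_sum lookup_single when_def in_keys_iff sum.delta)

lemma poly_induct[case_names zero single]:
  assumes "P 0" "\<And>f a b. P f \<Longrightarrow> P (Poly_Mapping.single a b + f)"
  shows "P (p::'a \<Rightarrow>\<^sub>0 'b::comm_monoid_add)"
proof -
  have "\<And>K. finite K \<Longrightarrow> P (\<Sum>m\<in>K. Poly_Mapping.single m (Poly_Mapping.lookup p m))"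
  proof -
    fix K :: "'a set" assume "finite K"
    then show "P (\<Sum>m\<in>K. Poly_Mapping.single m (Poly_Mapping.lookup p m))"
      by (induction K rule: finite_induct) (auto simp: assms)
  qed
  then show ?thesis using poly_expand[of p] by (metis finite_keys)
qed

lemma lookup_pderiv_var:
  "Poly_Mapping.lookup (pderiv_var v p) x
    = of_nat (Poly_Mapping.lookup x v + 1) * Poly_Mapping.lookup p (x + Poly_Mapping.single v 1)"
proof -
  have t: "(of_nat (Poly_Mapping.lookup m v) * Poly_Mapping.lookup p m when
              Poly_Mapping.update v (Poly_Mapping.lookup m v - 1) m = x)
        = (if m = x + Poly_Mapping.single v 1 then of_nat (Poly_Mapping.lookup x v + 1) * Poly_Mapping.lookup p m else 0)"
    for m
  proof (cases "Poly_Mapping.lookup m v = 0")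
    case True
    have "m \<noteq> x + Poly_Mapping.single v 1"
    proof
      assume "m = x + Poly_Mapping.single v 1"
      then have "Poly_Mapping.lookup m v = Poly_Mapping.lookup x v + 1" by (simp add: lookup_add)
      with True show False by simp
    qed
    then show ?thesis using True by (simp add: when_def)
  next
    case False
    have "(Poly_Mapping.update v (Poly_Mapping.lookup m v - 1) m = x) \<longleftrightarrow> m = x + Poly_Mapping.single v 1"
    proof
      assume h: "Poly_Mapping.update v (Poly_Mapping.lookup m v - 1) m = x"
      show "m = x + Poly_Mapping.single v 1"
      proof (rule poly_mapping_eqI)
        fix k
        show "Poly_Mapping.lookup m k = Poly_Mapping.lookup (x + Poly_Mapping.single v 1) k"
          using False arg_cong[OF h, of "\<lambda>q. Poly_Mapping.lookup q k"]
          by (auto simp: lookup_update lookup_add lookup_single when_def split: if_splits)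
      qed
    next
      assume h: "m = x + Poly_Mapping.single v 1"
      show "Poly_Mapping.update v (Poly_Mapping.lookup m v - 1) m = x"
        by (rule poly_mapping_eqI) (auto simp: h lookup_update lookup_add lookup_single when_def)
    qed
    then show ?thesis by (auto simp: when_def lookup_add)
  qed
  show ?thesis
    unfolding pderiv_var_def lookup_sum lookup_single t
    by (simp add: sum.delta in_keys_iff)
qed


abbreviation lk where "lk \<equiv> Poly_Mapping.lookup"
abbreviation sg where "sg \<equiv> Poly_Mapping.single"

lemma pderiv_var_add: "pderiv_var v (p + q) = pderiv_var v p + pderiv_var v q"
  by (rule poly_mapping_eqI) (simp add: lookup_pderiv_var lookup_add distrib_left)

lemma pderiv_var_zero[simp]: "pderiv_var v 0 = 0"
  by (simp add: pderiv_var_def)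

lemma pderiv_var_single:
  "pderiv_var v (sg a (c::'k::comm_ring_1)) = sg (Poly_Mapping.update v (lk a v - 1) a) (of_nat (lk a v) * c)"
  by (cases "c = 0") (simp_all add: pderiv_var_def)

lemma upd_add_shift:
  "sg (Poly_Mapping.update v (lk a v - 1) a + b) (of_nat (lk a v) * (z::'k::comm_ring_1))
   = sg (Poly_Mapping.update v (lk (a + b) v - 1) (a + b)) (of_nat (lk a v) * z)"
proof (cases "lk a v = 0")
  case False
  have "Poly_Mapping.update v (lk a v - 1) a + b = Poly_Mapping.update v (lk (a + b) v - 1) (a + b)"
    by (rule poly_mapping_eqI) (use False in \<open>auto simp: lookup_update lookup_add\<close>)
  then show ?thesis by simp
qed simp

lemma pderiv_var_mult_single:
  "pderiv_var v (sg a b * sg a' b') = pderiv_var v (sg a b) * sg a' b' + sg a (b::'k::comm_ring_1) * pderiv_var v (sg a' b')"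
proof -
  have 1: "pderiv_var v (sg a b) * sg a' b' = sg (Poly_Mapping.update v (lk (a + a') v - 1) (a + a')) (of_nat (lk a v) * (b * b'))"
    using upd_add_shift[of v a a' "b * b'"] by (simp add: pderiv_var_single mult_single mult.assoc)
  have 2: "sg a b * pderiv_var v (sg a' b') = sg (Poly_Mapping.update v (lk (a' + a) v - 1) (a' + a)) (of_nat (lk a' v) * (b * b'))"
    using upd_add_shift[of v a' a "b * b'"] by (simp add: pderiv_var_single mult_single mult_ac add.commute)
  show ?thesis
    unfolding 1 2 by (simp add: pderiv_var_single mult_single lookup_add single_add[symmetric] add.commute distrib_right)
qed

lemma pderiv_var_mult:
  "pderiv_var v (p * q) = pderiv_var v p * q + p * pderiv_var v (q :: 'k::comm_ring_1 pol)"
proof (induction p rule: poly_induct)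
  case zero then show ?case by simp
next
  case (single f a b)
  have "pderiv_var v (sg a b * q) = pderiv_var v (sg a b) * q + sg a b * pderiv_var v q"
  proof (induction q rule: poly_induct)
    case zero then show ?case by simp
  next
    case (single g a' b')
    then show ?case by (simp add: distrib_left distrib_right pderiv_var_add pderiv_var_mult_single)
  qed
  with single show ?case by (simp add: distrib_left distrib_right pderiv_var_add)
qed

lemma finite_vars[simp]: "finite (vars p)"
  by (simp add: vars_def)

lemma vars_zero[simp]: "vars 0 = {}"
  by (simp add: vars_def)

lemma vars_add: "vars (p + q) \<subseteq> vars p \<union> vars q"
  unfolding vars_def using keys_add[of p q] by blast

lemma keys_add_nat: "Poly_Mapping.keys ((a::var \<Rightarrow>\<^sub>0 nat) + b) \<subseteq> Poly_Mapping.keys a \<union> Poly_Mapping.keys b"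
  by (rule keys_add)

lemma vars_mult: "vars ((p::'k::comm_ring_1 pol) * q) \<subseteq> vars p \<union> vars q"
proof
  fix x assume "x \<in> vars (p * q)"
  then obtain m where m: "m \<in> Poly_Mapping.keys (p * q)" "x \<in> Poly_Mapping.keys m" by (auto simp: vars_def)
  then obtain a b where "m = a + b" "a \<in> Poly_Mapping.keys p" "b \<in> Poly_Mapping.keys q"
    using keys_mult[of p q] by blast
  with m keys_add_nat[of a b] show "x \<in> vars p \<union> vars q" by (auto simp: vars_def)
qed

lemma vars_uminus[simp]: "vars (- (p::'k::comm_ring_1 pol)) = vars p"
  by (simp add: vars_def)

lemma vars_diff: "vars ((p::'k::comm_ring_1 pol) - q) \<subseteq> vars p \<union> vars q"
  using vars_add[of p "-q"] by simp

lemma vars_sum: "vars (sum g A) \<subseteq> (\<Union>a\<in>A. vars (g a))"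
  unfolding vars_def using keys_sum[of g A] by blast

lemma vars_single: "vars (sg m c) \<subseteq> Poly_Mapping.keys m"
  by (auto simp: vars_def split: if_splits)

lemma vars_const[simp]: "vars (const c) = {}"
  using vars_single[of 0 c] by (simp add: const_def)

lemma vars_of_nat[simp]: "vars (of_nat k :: 'k::comm_ring_1 pol) = {}"
  using vars_single[of 0 "of_nat k :: 'k"] by simp

lemma vars_of_int[simp]: "vars (of_int k :: 'k::comm_ring_1 pol) = {}"
  using vars_single[of 0 "of_int k :: 'k"] by simp

lemma vars_Var: "vars (Var v :: 'k::comm_ring_1 pol) \<subseteq> {v}"
  using vars_single[of "sg v 1" "1::'k"] by (simp add: Var_def)

lemma vars_pderiv: "vars (pderiv_var v p) \<subseteq> vars p"
proof -
  have "vars (pderiv_var v p) \<subseteq> (\<Union>m\<in>Poly_Mapping.keys p. vars (sg (Poly_Mapping.update v (lk m v - 1) m)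
                        (of_nat (lk m v) * lk p m)))"
    unfolding pderiv_var_def by (rule vars_sum)
  also have "\<dots> \<subseteq> vars p"
  proof (rule UN_least)
    fix m assume m: "m \<in> Poly_Mapping.keys p"
    have "vars (sg (Poly_Mapping.update v (lk m v - 1) m) (of_nat (lk m v) * lk p m)) \<subseteq> Poly_Mapping.keys m"
    proof (cases "lk m v = 0")
      case True then show ?thesis by simp
    next
      case False
      have "Poly_Mapping.keys (Poly_Mapping.update v (lk m v - 1) m) \<subseteq> Poly_Mapping.keys m"
        using False by (auto simp: keys_update in_keys_iff)
      then show ?thesis using vars_single by blast
    qed
    with m show "vars (sg (Poly_Mapping.update v (lk m v - 1) m) (of_nat (lk m v) * lk p m)) \<subseteq> vars p"
      by (auto simp: vars_def)
  qed
  finally show ?thesis .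
qed

lemma pderiv_var_notin: "v \<notin> vars p \<Longrightarrow> pderiv_var v p = 0"
  unfolding pderiv_var_def
  by (rule sum.neutral) (auto simp: vars_def in_keys_iff)

lemma der_eq:
  assumes "finite S" "vars p \<subseteq> S"
  shows "der \<delta> p = (\<Sum>v\<in>S. pderiv_var v p * \<delta> v)"
  unfolding der_def
  by (rule sum.mono_neutral_left) (use assms in \<open>auto simp: pderiv_var_notin\<close>)

lemma der_zero[simp]: "der \<delta> 0 = 0"
  by (simp add: der_def)

lemma der_add: "der \<delta> (p + q) = der \<delta> p + der \<delta> q"
proof -
  let ?S = "vars p \<union> vars q"
  have "der \<delta> (p + q) = (\<Sum>v\<in>?S. pderiv_var v (p + q) * \<delta> v)"
    by (rule der_eq) (auto dest: set_mp[OF vars_add])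
  also have "\<dots> = (\<Sum>v\<in>?S. pderiv_var v p * \<delta> v) + (\<Sum>v\<in>?S. pderiv_var v q * \<delta> v)"
    by (simp add: pderiv_var_add distrib_right sum.distrib)
  also have "\<dots> = der \<delta> p + der \<delta> q"
    using der_eq[of ?S p \<delta>] der_eq[of ?S q \<delta>] by simp
  finally show ?thesis .
qed

lemma der_mult: "der \<delta> (p * q) = der \<delta> p * q + p * der \<delta> (q::'k::comm_ring_1 pol)"
proof -
  let ?S = "vars p \<union> vars q"
  have "der \<delta> (p * q) = (\<Sum>v\<in>?S. pderiv_var v (p * q) * \<delta> v)"
    by (rule der_eq) (auto dest: set_mp[OF vars_mult])
  also have "\<dots> = (\<Sum>v\<in>?S. pderiv_var v p * \<delta> v) * q + p * (\<Sum>v\<in>?S. pderiv_var v q * \<delta> v)"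
  proof -
    have "(\<Sum>v\<in>?S. pderiv_var v (p * q) * \<delta> v) = (\<Sum>v\<in>?S. (pderiv_var v p * \<delta> v) * q + p * (pderiv_var v q * \<delta> v))"
      by (rule sum.cong) (simp_all add: pderiv_var_mult algebra_simps)
    then show ?thesis by (simp add: sum.distrib sum_distrib_left sum_distrib_right)
  qed
  also have "\<dots> = der \<delta> p * q + p * der \<delta> q"
    using der_eq[of ?S p \<delta>] der_eq[of ?S q \<delta>] by simp
  finally show ?thesis .
qed

lemma der_sum: "der \<delta> (sum g A) = (\<Sum>a\<in>A. der \<delta> (g a))"
  by (induction A rule: infinite_finite_induct) (simp_all add: der_add)

lemma der_uminus: "der \<delta> (- (p::'k::comm_ring_1 pol)) = - der \<delta> p"
  using der_add[of \<delta> p "-p"] by (simp add: eq_neg_iff_add_eq_0 add.commute)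

lemma der_const[simp]: "der \<delta> (const c) = 0"
  by (simp add: der_def)

lemma der_of_nat[simp]: "der \<delta> (of_nat k :: 'k::comm_ring_1 pol) = 0"
  by (simp add: der_def)

lemma der_of_int[simp]: "der \<delta> (of_int k :: 'k::comm_ring_1 pol) = 0"
  by (simp add: der_def)

lemma der_sc: "der \<delta> (sc c p) = sc c (der \<delta> p)"
  by (simp add: sc_def der_mult)

lemma pderiv_Var_self: "pderiv_var v (Var v :: 'k::comm_ring_1 pol) = 1"
proof -
  have "Poly_Mapping.update v 0 (sg v 1) = (0 :: var \<Rightarrow>\<^sub>0 nat)"
    by (rule poly_mapping_eqI) (simp add: lookup_update lookup_single when_def)
  then show ?thesis by (simp add: Var_def pderiv_var_single)
qed

lemma der_Var: "der \<delta> (Var v :: 'k::comm_ring_1 pol) = \<delta> v"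
proof -
  have "der \<delta> (Var v :: 'k pol) = (\<Sum>w\<in>{v}. pderiv_var w (Var v :: 'k pol) * \<delta> w)"
    by (rule der_eq) (use vars_Var in auto)
  then show ?thesis by (simp add: pderiv_Var_self)
qed

lemma der_one[simp]: "der \<delta> (1 :: 'k::comm_ring_1 pol) = 0"
  using der_const[of \<delta> "1::'k"] by (simp add: const_def)

lemma der_power: "der \<delta> (p ^ Suc k) = of_nat (Suc k) * p ^ k * der \<delta> (p::'k::comm_ring_1 pol)"
  by (induction k) (simp_all add: der_mult algebra_simps)

lemma der_power': "der \<delta> (p ^ k) = of_nat k * p ^ (k - 1) * der \<delta> (p::'k::comm_ring_1 pol)"
  by (cases k) (simp_all add: der_power del: power_Suc)

lemma der_funpow_zero: "(der \<delta> ^^ k) 0 = 0"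
  by (induction k) auto

lemma der_funpow_sc: "(der \<delta> ^^ k) (sc c p) = sc c ((der \<delta> ^^ k) p)"
  by (induction k) (auto simp: der_sc)

lemma der_funpow_add: "(der \<delta> ^^ k) (p + q) = (der \<delta> ^^ k) p + (der \<delta> ^^ k) q"
  by (induction k) (auto simp: der_add)

lemma der_funpow_sum: "(der \<delta> ^^ k) (sum g A) = (\<Sum>a\<in>A. (der \<delta> ^^ k) (g a))"
  by (induction A rule: infinite_finite_induct) (simp_all add: der_funpow_add der_funpow_zero)

lemma KA_iff: "p \<in> KA n \<longleftrightarrow> vars p \<subseteq> Avars n"
  by (simp add: KA_def)

lemma KA_zero[simp]: "0 \<in> KA n" by (simp add: KA_iff)
lemma KA_add: "p \<in> KA n \<Longrightarrow> q \<in> KA n \<Longrightarrow> p + q \<in> KA n"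
  using vars_add[of p q] by (auto simp: KA_iff)
lemma KA_mult: "p \<in> KA n \<Longrightarrow> q \<in> KA n \<Longrightarrow> (p::'k::comm_ring_1 pol) * q \<in> KA n"
  using vars_mult[of p q] by (auto simp: KA_iff)
lemma KA_uminus: "p \<in> KA n \<Longrightarrow> - (p::'k::comm_ring_1 pol) \<in> KA n"
  by (auto simp: KA_iff)
lemma KA_diff: "p \<in> KA n \<Longrightarrow> q \<in> KA n \<Longrightarrow> (p::'k::comm_ring_1 pol) - q \<in> KA n"
  using vars_diff[of p q] by (auto simp: KA_iff)
lemma KA_const[simp]: "const c \<in> KA n" by (simp add: KA_iff)
lemma KA_of_nat[simp]: "(of_nat k :: 'k::comm_ring_1 pol) \<in> KA n" by (simp add: KA_iff)
lemma KA_of_int[simp]: "(of_int k :: 'k::comm_ring_1 pol) \<in> KA n" by (simp add: KA_iff)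
lemma KA_numeral[simp]: "(numeral k :: 'k::comm_ring_1 pol) \<in> KA n"
  using KA_of_nat[of "numeral k" n] by simp
lemma KA_sc: "p \<in> KA n \<Longrightarrow> sc c p \<in> KA n"
  by (simp add: sc_def KA_mult)
lemma KA_sum: "(\<And>a. a \<in> A \<Longrightarrow> g a \<in> KA n) \<Longrightarrow> sum g A \<in> KA n"
  by (induction A rule: infinite_finite_induct) (auto intro: KA_add)
lemma KA_acoef[simp]: "acoef n i j \<in> KA n"
  using vars_Var[of "Av i j"] by (auto simp: acoef_def KA_iff Avars_def)
lemma KA_pderiv: "p \<in> KA n \<Longrightarrow> pderiv_var v p \<in> KA n"
  using vars_pderiv[of v p] by (auto simp: KA_iff)

lemma der_KA:
  assumes "\<forall>v\<in>Avars n. \<delta> v \<in> KA n" "p \<in> KA n"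
  shows "der \<delta> p \<in> KA n"
  unfolding der_def
proof (rule KA_sum)
  fix v assume "v \<in> vars p"
  then have "v \<in> Avars n" using assms(2) by (auto simp: KA_iff)
  then show "pderiv_var v p * \<delta> v \<in> KA n"
    using assms by (auto intro!: KA_mult KA_pderiv)
qed

lemma const_mult: "const a * const b = const (a * b)"
  by (simp add: const_def mult_single)
lemma const_add: "const (a + b) = const a + const b"
  by (simp add: const_def single_add)
lemma sc_sc[simp]: "sc a (sc b p) = sc (a * b) p"
  by (simp add: sc_def const_mult mult.assoc[symmetric])
lemma sc_add_left: "sc (a + b) p = sc a p + sc b p"
  by (simp add: sc_def const_add distrib_right)
lemma sc_add_right: "sc a (p + q) = sc a p + sc a q"
  by (simp add: sc_def distrib_left)
lemma sc_zero_left[simp]: "sc 0 p = 0" by (simp add: sc_def const_def)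
lemma sc_zero_right[simp]: "sc a 0 = 0" by (simp add: sc_def)
lemma sc_one[simp]: "sc 1 p = p" by (simp add: sc_def const_def)
lemma sc_mult_left: "sc a p * q = sc a (p * q)" by (simp add: sc_def mult.assoc)
lemma sc_mult_right: "p * sc a q = sc a (p * q)" by (simp add: sc_def mult_ac)
lemma sc_sum: "sc a (sum g A) = (\<Sum>x\<in>A. sc a (g x))"
  by (simp add: sc_def sum_distrib_left)
lemma sc_neg: "sc (- a) p = - sc a p"
  by (simp add: sc_def const_def single_uminus)
lemma sc_of_nat: "sc (of_nat k) p = of_nat k * p"
  by (simp add: sc_def const_def)
lemma sc_of_int: "sc (of_int k) p = of_int k * p"
  by (simp add: sc_def const_def)
lemma sc_uminus_right: "sc a (- p) = - sc a p"
  by (simp add: sc_def)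
lemma sc_eq_zero_iff: "sc (a::'k::field) p = 0 \<longleftrightarrow> a = 0 \<or> p = 0"
proof
  assume h: "sc a p = 0"
  show "a = 0 \<or> p = 0"
  proof (rule ccontr)
    assume "\<not> (a = 0 \<or> p = 0)"
    then have "a \<noteq> 0" "p \<noteq> 0" by auto
    have "p = sc (inverse a) (sc a p)" using \<open>a \<noteq> 0\<close> by simp
    with h \<open>p \<noteq> 0\<close> show False by simp
  qed
qed auto
lemma sc_diff_left: "sc (a - b) p = sc a p - sc b p"
  using sc_add_left[of a "- b" p] by (simp add: sc_neg)

definition goodder :: "nat \<Rightarrow> (var \<Rightarrow> 'k::comm_ring_1 pol) \<Rightarrow> bool" where
  "goodder n \<delta> \<longleftrightarrow> (\<forall>v\<in>Avars n. \<delta> v \<in> KA n)"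

lemma good_ops:
  "goodder n (gD1 n)" "goodder n (gD2 n)" "goodder n (gD3 n)"
  "goodder n (gDh1 n)" "goodder n (gDh2 n)" "goodder n (gDh3 n)"
  "goodder n (gE1 n)" "goodder n (gE2 n)"
  by (auto simp: goodder_def Avars_def gD1_def gD2_def gD3_def gDh1_def gDh2_def gDh3_def
      gE1_def gE2_def intro!: KA_mult KA_add KA_uminus KA_diff)

definition XX :: "nat \<times> nat \<times> nat \<Rightarrow> 'k::comm_ring_1 pol" where
  "XX t = (case t of (a, b, c) \<Rightarrow> uu 1 ^ a * uu 2 ^ b * uu 3 ^ c)"

lemma der_XX:
  "der \<delta> (XX (a, b, c)) =
     of_nat a * uu 1 ^ (a - 1) * uu 2 ^ b * uu 3 ^ c * \<delta> (U 1)
   + of_nat b * uu 1 ^ a * uu 2 ^ (b - 1) * uu 3 ^ c * \<delta> (U 2)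
   + of_nat c * uu 1 ^ a * uu 2 ^ b * uu 3 ^ (c - 1) * \<delta> (U 3)"
  by (simp add: XX_def der_mult der_power' uu_def der_Var algebra_simps)

lemma pow_shift: "of_nat a * (p::'k::comm_ring_1 pol) ^ (a - Suc 0) * p = of_nat a * p ^ a"
  by (cases a) (simp_all add: mult_ac)

lemma sc_Suc: "sc (1 + of_nat k) p = (1 + of_nat k) * p"
  using sc_of_nat[of "Suc k" p] by simp

lemma XX_D1: "D1 n (XX (a, b, c)) = sc (of_nat b) (XX (a + 1, b - 1, c))"
  unfolding D1_def der_XX by (cases b) (simp_all add: gD1_def XX_def sc_of_nat sc_Suc mult_ac)
lemma XX_D2: "D2 n (XX (a, b, c)) = sc (of_nat c) (XX (a, b + 1, c - 1))"
  unfolding D2_def der_XX by (cases c) (simp_all add: gD2_def XX_def sc_of_nat sc_Suc mult_ac)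
lemma XX_D3: "D3 n (XX (a, b, c)) = sc (of_nat c) (XX (a + 1, b, c - 1))"
  unfolding D3_def der_XX by (cases c) (simp_all add: gD3_def XX_def sc_of_nat sc_Suc mult_ac)
lemma XX_Dh1: "Dh1 n (XX (a, b, c)) = sc (of_nat a) (XX (a - 1, b + 1, c))"
  unfolding Dh1_def der_XX by (cases a) (simp_all add: gDh1_def XX_def sc_of_nat sc_Suc mult_ac)
lemma XX_Dh2: "Dh2 n (XX (a, b, c)) = sc (of_nat b) (XX (a, b - 1, c + 1))"
  unfolding Dh2_def der_XX by (cases b) (simp_all add: gDh2_def XX_def sc_of_nat sc_Suc mult_ac)
lemma XX_Dh3: "Dh3 n (XX (a, b, c)) = sc (of_nat a) (XX (a - 1, b, c + 1))"
  unfolding Dh3_def der_XX by (cases a) (simp_all add: gDh3_def XX_def sc_of_nat sc_Suc mult_ac)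
lemma XX_E1: "E1 n (XX (a, b, c)) = sc (of_int (int a - int b)) (XX (a, b, c))"
proof -
  have "E1 n (XX (a, b, c)) = of_nat a * uu 1 ^ (a - 1) * uu 1 * uu 2 ^ b * uu 3 ^ c
       - of_nat b * uu 2 ^ (b - 1) * uu 2 * uu 1 ^ a * uu 3 ^ c"
    by (simp add: E1_def der_XX gE1_def algebra_simps)
  also have "\<dots> = of_nat a * uu 1 ^ a * uu 2 ^ b * uu 3 ^ c - of_nat b * uu 2 ^ b * uu 1 ^ a * uu 3 ^ c"
    by (simp add: pow_shift)
  finally show ?thesis by (simp add: sc_diff_left sc_of_nat XX_def algebra_simps)
qed
lemma XX_E2: "E2 n (XX (a, b, c)) = sc (of_int (int b - int c)) (XX (a, b, c))"
proof -
  have "E2 n (XX (a, b, c)) = of_nat b * uu 2 ^ (b - 1) * uu 2 * uu 1 ^ a * uu 3 ^ c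
       - of_nat c * uu 3 ^ (c - 1) * uu 3 * uu 1 ^ a * uu 2 ^ b"
    by (simp add: E2_def der_XX gE2_def algebra_simps)
  also have "\<dots> = of_nat b * uu 2 ^ b * uu 1 ^ a * uu 3 ^ c - of_nat c * uu 3 ^ c * uu 1 ^ a * uu 2 ^ b"
    by (simp add: pow_shift)
  finally show ?thesis by (simp add: sc_diff_left sc_of_nat XX_def algebra_simps)
qed

definition um :: "nat \<times> nat \<times> nat \<Rightarrow> (var \<Rightarrow>\<^sub>0 nat)" where
  "um t = (case t of (a, b, c) \<Rightarrow> sg (U 1) a + sg (U 2) b + sg (U 3) c)"

lemma Var_pow: "(Var v :: 'k::comm_ring_1 pol) ^ k = sg (sg v k) 1"
proof (induction k)
  case 0 then show ?case by simp
next
  case (Suc k)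
  then show ?case by (simp add: Var_def mult_single single_add[symmetric])
qed

lemma XX_single: "(XX t :: 'k::comm_ring_1 pol) = sg (um t) 1"
  by (cases t) (simp add: XX_def um_def uu_def Var_pow mult_single)

lemma U_notin_Avars[simp]: "U k \<notin> Avars n"
  by (simp add: Avars_def)

lemma keys_sub_lk0: "Poly_Mapping.keys m \<subseteq> Avars n \<Longrightarrow> lk m (U k) = 0"
  by (meson U_notin_Avars in_keys_iff subsetD)

lemma um_eq:
  assumes "Poly_Mapping.keys m \<subseteq> Avars n" "Poly_Mapping.keys m' \<subseteq> Avars n"
  shows "(m + um t = m' + um s) \<longleftrightarrow> (m = m' \<and> t = s)"
proof
  assume h: "m + um t = m' + um s"
  obtain a b c where t: "t = (a, b, c)" by (cases t) auto
  obtain a' b' c' where s: "s = (a', b', c')" by (cases s) auto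
  have "lk (m + um t) (U k) = lk (m' + um s) (U k)" for k using h by simp
  from this[of 1] this[of 2] this[of 3] keys_sub_lk0[OF assms(1)] keys_sub_lk0[OF assms(2)]
  have "a = a'" "b = b'" "c = c'"
    by (simp_all add: t s um_def lookup_add lookup_single)
  then have "t = s" by (simp add: t s)
  with h show "m = m' \<and> t = s" by simp
qed simp

lemma keys_of_KA: "P \<in> KA n \<Longrightarrow> m \<in> Poly_Mapping.keys P \<Longrightarrow> Poly_Mapping.keys m \<subseteq> Avars n"
  by (auto simp: KA_iff vars_def)

lemma lookup_KA_XX:
  assumes P: "P \<in> KA n" and m': "Poly_Mapping.keys m' \<subseteq> Avars n"
  shows "lk (P * XX t) (m' + um s) = (if t = s then lk P m' else (0::'k::comm_ring_1))"
proof -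
  have "P * XX t = (\<Sum>m\<in>Poly_Mapping.keys P. sg m (lk P m)) * sg (um t) 1"
    using poly_expand[of P] by (simp add: XX_single)
  also have "\<dots> = (\<Sum>m\<in>Poly_Mapping.keys P. sg (m + um t) (lk P m))"
    by (simp add: sum_distrib_right mult_single)
  finally have "lk (P * XX t) (m' + um s) = (\<Sum>m\<in>Poly_Mapping.keys P. lk P m when m + um t = m' + um s)"
    by (simp add: lookup_sum lookup_single)
  also have "\<dots> = (\<Sum>m\<in>Poly_Mapping.keys P. if m = m' then (if t = s then lk P m else 0) else 0)"
    by (rule sum.cong) (use um_eq[OF keys_of_KA[OF P] m'] in \<open>auto simp: when_def\<close>)
  also have "\<dots> = (if t = s then lk P m' else 0)"
    by (simp add: sum.delta in_keys_iff)
  finally show ?thesis .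
qed

lemma relation:
  fixes C :: "nat \<times> nat \<times> nat \<Rightarrow> 'k::comm_ring_1 pol"
  assumes fin: "finite T" and CA: "\<forall>t\<in>T. C t \<in> KA n" and good: "goodder n \<delta>"
    and DX: "\<forall>t\<in>T. der \<delta> (XX t) = sc (\<kappa> t) (XX (\<sigma> t))"
    and D0: "der \<delta> (\<Sum>t\<in>T. C t * XX t) = 0" and s: "s \<in> T"
  shows "der \<delta> (C s) + (\<Sum>t\<in>{t\<in>T. \<sigma> t = s}. sc (\<kappa> t) (C t)) = 0"
proof -
  have exp: "der \<delta> (\<Sum>t\<in>T. C t * XX t) = (\<Sum>t\<in>T. der \<delta> (C t) * XX t + sc (\<kappa> t) (C t) * XX (\<sigma> t))"
    unfolding der_sum by (rule sum.cong) (use DX in \<open>auto simp: der_mult sc_mult_left sc_mult_right\<close>)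
  have dCA: "der \<delta> (C t) \<in> KA n" if "t \<in> T" for t
    using der_KA[of n \<delta> "C t"] good CA that by (auto simp: goodder_def)
  define R where "R = der \<delta> (C s) + (\<Sum>t\<in>{t\<in>T. \<sigma> t = s}. sc (\<kappa> t) (C t))"
  have RA: "R \<in> KA n"
    unfolding R_def using dCA[OF s] CA by (auto intro!: KA_add KA_sum KA_sc)
  have "R = 0"
  proof (rule poly_mapping_eqI)
    fix m'
    show "lk R m' = lk 0 m'"
    proof (cases "Poly_Mapping.keys m' \<subseteq> Avars n")
      case False
      then have "m' \<notin> Poly_Mapping.keys R" using keys_of_KA[OF RA] by blast
      then show ?thesis by (simp add: in_keys_iff)
    next
      case True
      have "0 = lk (der \<delta> (\<Sum>t\<in>T. C t * XX t)) (m' + um s)" using D0 by simp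
      also have "\<dots> = (\<Sum>t\<in>T. lk (der \<delta> (C t) * XX t) (m' + um s)) + (\<Sum>t\<in>T. lk (sc (\<kappa> t) (C t) * XX (\<sigma> t)) (m' + um s))"
        unfolding exp by (simp add: lookup_sum lookup_add sum.distrib)
      also have "\<dots> = (\<Sum>t\<in>T. if t = s then lk (der \<delta> (C t)) m' else 0) + (\<Sum>t\<in>T. if \<sigma> t = s then lk (sc (\<kappa> t) (C t)) m' else 0)"
      proof -
        have "(\<Sum>t\<in>T. lk (der \<delta> (C t) * XX t) (m' + um s)) = (\<Sum>t\<in>T. if t = s then lk (der \<delta> (C t)) m' else 0)"
          by (rule sum.cong) (use lookup_KA_XX[OF dCA True] in auto)
        moreover have "(\<Sum>t\<in>T. lk (sc (\<kappa> t) (C t) * XX (\<sigma> t)) (m' + um s)) = (\<Sum>t\<in>T. if \<sigma> t = s then lk (sc (\<kappa> t) (C t)) m' else 0)"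
        proof (rule sum.cong)
          fix t assume "t \<in> T"
          then have "sc (\<kappa> t) (C t) \<in> KA n" using CA by (simp add: KA_sc)
          from lookup_KA_XX[OF this True, of "\<sigma> t" s]
          show "lk (sc (\<kappa> t) (C t) * XX (\<sigma> t)) (m' + um s) = (if \<sigma> t = s then lk (sc (\<kappa> t) (C t)) m' else 0)" .
        qed simp
        ultimately show ?thesis by simp
      qed
      also have "\<dots> = lk R m'"
        unfolding R_def using s fin by (simp add: sum.delta lookup_add lookup_sum sum.inter_filter) (intro sum.cong; simp)
      finally show ?thesis by simp
    qed
  qed
  then show ?thesis by (simp add: R_def)
qed

lemma subspace_sum: "subspace_pol W \<Longrightarrow> (\<And>a. a \<in> A \<Longrightarrow> g a \<in> W) \<Longrightarrow> sum g A \<in> W"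
  by (induction A rule: infinite_finite_induct) (auto simp: subspace_pol_def)

lemma subspace_sc: "subspace_pol W \<Longrightarrow> p \<in> W \<Longrightarrow> sc a p \<in> W"
  by (simp add: subspace_pol_def)

lemma subspace_add: "subspace_pol W \<Longrightarrow> p \<in> W \<Longrightarrow> q \<in> W \<Longrightarrow> p + q \<in> W"
  by (simp add: subspace_pol_def)

lemma subspace_uminus: "subspace_pol W \<Longrightarrow> p \<in> W \<Longrightarrow> - (p::'k::comm_ring_1 pol) \<in> W"
  using subspace_sc[of W p "-1"] by (simp add: sc_neg)

lemma kspan_sup: "S \<subseteq> kspan S"
proof
  fix q assume "q \<in> S"
  then show "q \<in> kspan S" unfolding kspan_def
    by (intro CollectI exI[of _ "{q}"] exI[of _ "\<lambda>_. 1"]) auto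
qed

lemma kspan_least:
  assumes "subspace_pol W" "S \<subseteq> W"
  shows "kspan S \<subseteq> W"
proof
  fix p assume "p \<in> kspan S"
  then obtain F l where "finite F" "F \<subseteq> S" "p = (\<Sum>q\<in>F. sc (l q) q)" by (auto simp: kspan_def)
  then show "p \<in> W" using assms by (auto intro!: subspace_sum subspace_sc)
qed

lemma kspan_subspace: "subspace_pol (kspan (S :: 'k::comm_ring_1 pol set))"
  unfolding subspace_pol_def
proof (intro conjI ballI allI)
  show "0 \<in> kspan S" unfolding kspan_def
    by (intro CollectI exI[of _ "{}"]) auto
next
  fix p q assume "p \<in> kspan S" "q \<in> kspan S"
  then obtain F1 l1 F2 l2 where F: "finite F1" "F1 \<subseteq> S" "p = (\<Sum>x\<in>F1. sc (l1 x) x)"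
     "finite F2" "F2 \<subseteq> S" "q = (\<Sum>x\<in>F2. sc (l2 x) x)" by (auto simp: kspan_def)
  define l where "l x = (if x \<in> F1 then l1 x else 0) + (if x \<in> F2 then l2 x else 0)" for x
  have "(\<Sum>x\<in>F1 \<union> F2. sc (l x) x) = (\<Sum>x\<in>F1 \<union> F2. sc (if x \<in> F1 then l1 x else 0) x) + (\<Sum>x\<in>F1 \<union> F2. sc (if x \<in> F2 then l2 x else 0) x)"
    by (simp add: l_def sc_add_left sum.distrib)
  also have "(\<Sum>x\<in>F1 \<union> F2. sc (if x \<in> F1 then l1 x else 0) x) = p"
    unfolding F(3) by (rule sum.mono_neutral_cong_right) (use F in auto)
  also have "(\<Sum>x\<in>F1 \<union> F2. sc (if x \<in> F2 then l2 x else 0) x) = q"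
    unfolding F(6) by (rule sum.mono_neutral_cong_right) (use F in auto)
  finally show "p + q \<in> kspan S" unfolding kspan_def
    by (intro CollectI exI[of _ "F1 \<union> F2"] exI[of _ l]) (use F in auto)
next
  fix a p assume "p \<in> kspan S"
  then obtain F l where F: "finite F" "F \<subseteq> S" "p = (\<Sum>x\<in>F. sc (l x) x)" by (auto simp: kspan_def)
  then have "sc a p = (\<Sum>x\<in>F. sc (a * l x) x)" by (simp add: sc_sum)
  then show "sc a p \<in> kspan S" unfolding kspan_def
    by (intro CollectI exI[of _ F] exI[of _ "\<lambda>x. a * l x"]) (use F in auto)
qed

lemma KA_subspace: "subspace_pol (KA n)"
  by (auto simp: subspace_pol_def intro: KA_add KA_sc)

definition Tset :: "nat \<Rightarrow> (nat \<times> nat \<times> nat) set" where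
  "Tset d = {(a, b, e). a + b + e = d}"

definition NN :: "nat \<Rightarrow> nat \<Rightarrow> nat \<Rightarrow> 'k::field_char_0" where
  "NN d a b = fact d / (fact a * fact b * fact (d - (a + b)))"

definition CC :: "nat \<Rightarrow> (nat \<Rightarrow> nat \<Rightarrow> 'k::field_char_0 pol) \<Rightarrow> nat \<times> nat \<times> nat \<Rightarrow> 'k pol" where
  "CC d c t = (case t of (a, b, e) \<Rightarrow> sc (NN d a b) (c a b))"

lemma finite_Tset: "finite (Tset d)"
proof -
  have "Tset d \<subseteq> {..d} \<times> {..d} \<times> {..d}" by (auto simp: Tset_def)
  then show ?thesis by (rule finite_subset) auto
qed

lemma NN_nz: "NN d a b \<noteq> (0::'k::field_char_0)"
  by (simp add: NN_def)

lemma NN_00: "NN d 0 0 = (1::'k::field_char_0)"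
  by (simp add: NN_def)

locale thm6 =
  fixes n d :: nat and f :: "'k::field_char_0 pol" and c :: "nat \<Rightarrow> nat \<Rightarrow> 'k pol"
  assumes cA: "\<And>i j. i + j \<le> d \<Longrightarrow> c i j \<in> KA n"
    and f_def: "f = (\<Sum>i\<le>d. \<Sum>j\<le>d - i.
                   sc (fact d / (fact i * fact j * fact (d - (i + j))))
                      (c i j * uu 3 ^ (d - (i + j)) * uu 1 ^ i * uu 2 ^ j))"
    and contra: "contravariant n d f"
begin

abbreviation "T \<equiv> Tset d"
abbreviation "C \<equiv> CC d c"

lemma CA: "\<forall>t\<in>T. C t \<in> KA n"
  by (auto simp: Tset_def CC_def intro!: KA_sc cA)

lemma f_T: "f = (\<Sum>t\<in>T. C t * XX t)"
proof -
  have "f = (\<Sum>(i, j)\<in>Sigma {..d} (\<lambda>i. {..d - i}). sc (NN d i j) (c i j * uu 3 ^ (d - (i + j)) * uu 1 ^ i * uu 2 ^ j))"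
    unfolding f_def NN_def by (subst sum.Sigma) auto
  also have "\<dots> = (\<Sum>t\<in>T. C t * XX t)"
  proof (rule sum.reindex_bij_witness[where i = "\<lambda>(a, b, e). (a, b)" and j = "\<lambda>(a, b). (a, b, d - (a + b))"])
    show "\<And>a. a \<in> T \<Longrightarrow> (case case a of (a, b, e) \<Rightarrow> (a, b) of (a, b) \<Rightarrow> (a, b, d - (a + b))) = a"
      by (auto simp: Tset_def)
    show "\<And>a. a \<in> T \<Longrightarrow> (case a of (a, b, e) \<Rightarrow> (a, b)) \<in> Sigma {..d} (\<lambda>i. {..d - i})"
      by (auto simp: Tset_def)
    show "\<And>a. a \<in> Sigma {..d} (\<lambda>i. {..d - i}) \<Longrightarrow> (case case a of (a, b) \<Rightarrow> (a, b, d - (a + b)) of (a, b, e) \<Rightarrow> (a, b)) = a"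
      by auto
    show "\<And>a. a \<in> Sigma {..d} (\<lambda>i. {..d - i}) \<Longrightarrow> (case a of (a, b) \<Rightarrow> (a, b, d - (a + b))) \<in> T"
      by (auto simp: Tset_def)
    show "\<And>a. a \<in> Sigma {..d} (\<lambda>i. {..d - i}) \<Longrightarrow>
         C (case a of (a, b) \<Rightarrow> (a, b, d - (a + b))) * XX (case a of (a, b) \<Rightarrow> (a, b, d - (a + b))) =
         (case a of (i, j) \<Rightarrow> sc (NN d i j) (c i j * uu 3 ^ (d - (i + j)) * uu 1 ^ i * uu 2 ^ j))"
      by (auto simp: CC_def XX_def sc_def mult_ac)
  qed
  finally show ?thesis .
qed

lemma ops_f:
  "D1 n f = 0" "D2 n f = 0" "D3 n f = 0" "Dh1 n f = 0" "Dh2 n f = 0" "Dh3 n f = 0" "E1 n f = 0" "E2 n f = 0"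
  using contra by (auto simp: contravariant_def sl3_ops_def)

lemma rel:
  assumes "goodder n \<delta>" "\<forall>t\<in>T. der \<delta> (XX t) = sc (\<kappa> t) (XX (\<sigma> t))" "der \<delta> f = 0" "s \<in> T"
  shows "der \<delta> (C s) = - (\<Sum>t\<in>{t\<in>T. \<sigma> t = s}. sc (\<kappa> t) (C t))"
  using relation[OF finite_Tset CA assms(1,2) _ assms(4)] assms(3) f_T
  by (simp add: eq_neg_iff_add_eq_0)

lemmas rel_D1 = rel[OF good_ops(1), folded D1_def, OF _ ops_f(1), of "\<lambda>(a, b, e). of_nat b" "\<lambda>(a, b, e). (a + 1, b - 1, e)"]
lemmas rel_D2 = rel[OF good_ops(2), folded D2_def, OF _ ops_f(2), of "\<lambda>(a, b, e). of_nat e" "\<lambda>(a, b, e). (a, b + 1, e - 1)"]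
lemmas rel_D3 = rel[OF good_ops(3), folded D3_def, OF _ ops_f(3), of "\<lambda>(a, b, e). of_nat e" "\<lambda>(a, b, e). (a + 1, b, e - 1)"]
lemmas rel_Dh1 = rel[OF good_ops(4), folded Dh1_def, OF _ ops_f(4), of "\<lambda>(a, b, e). of_nat a" "\<lambda>(a, b, e). (a - 1, b + 1, e)"]
lemmas rel_Dh2 = rel[OF good_ops(5), folded Dh2_def, OF _ ops_f(5), of "\<lambda>(a, b, e). of_nat b" "\<lambda>(a, b, e). (a, b - 1, e + 1)"]
lemmas rel_Dh3 = rel[OF good_ops(6), folded Dh3_def, OF _ ops_f(6), of "\<lambda>(a, b, e). of_nat a" "\<lambda>(a, b, e). (a - 1, b, e + 1)"]
lemmas rel_E1 = rel[OF good_ops(7), folded E1_def, OF _ ops_f(7), of "\<lambda>(a, b, e). of_int (int a - int b)" "\<lambda>t. t"]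
lemmas rel_E2 = rel[OF good_ops(8), folded E2_def, OF _ ops_f(8), of "\<lambda>(a, b, e). of_int (int b - int e)" "\<lambda>t. t"]

end

lemma filt_single:
  assumes "\<And>a b e. (a, b, e) \<in> A \<Longrightarrow> \<sigma> (a, b, e) = s \<Longrightarrow> (a, b, e) = t0" "t0 \<in> A" "\<sigma> t0 = s"
  shows "{t\<in>A. \<sigma> t = s} = {t0}"
proof (intro set_eqI iffI)
  fix t assume "t \<in> {t\<in>A. \<sigma> t = s}"
  moreover obtain a b e where "t = (a, b, e)" by (cases t) auto
  ultimately show "t \<in> {t0}" using assms(1) by auto
qed (use assms in auto)

context thm6
begin

lemma relD1: "s \<in> T \<Longrightarrow> D1 n (C s) = - (\<Sum>t\<in>{t\<in>T. (case t of (a, b, e) \<Rightarrow> (a + 1, b - 1, e)) = s}. sc (case t of (a, b, e) \<Rightarrow> of_nat b) (C t))"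
  unfolding D1_def by (rule rel) (auto simp: good_ops ops_f[unfolded D1_def] XX_D1[unfolded D1_def])
lemma relD2: "s \<in> T \<Longrightarrow> D2 n (C s) = - (\<Sum>t\<in>{t\<in>T. (case t of (a, b, e) \<Rightarrow> (a, b + 1, e - 1)) = s}. sc (case t of (a, b, e) \<Rightarrow> of_nat e) (C t))"
  unfolding D2_def by (rule rel) (auto simp: good_ops ops_f[unfolded D2_def] XX_D2[unfolded D2_def])
lemma relD3: "s \<in> T \<Longrightarrow> D3 n (C s) = - (\<Sum>t\<in>{t\<in>T. (case t of (a, b, e) \<Rightarrow> (a + 1, b, e - 1)) = s}. sc (case t of (a, b, e) \<Rightarrow> of_nat e) (C t))"
  unfolding D3_def by (rule rel) (auto simp: good_ops ops_f[unfolded D3_def] XX_D3[unfolded D3_def])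
lemma relDh1: "s \<in> T \<Longrightarrow> Dh1 n (C s) = - (\<Sum>t\<in>{t\<in>T. (case t of (a, b, e) \<Rightarrow> (a - 1, b + 1, e)) = s}. sc (case t of (a, b, e) \<Rightarrow> of_nat a) (C t))"
  unfolding Dh1_def by (rule rel) (auto simp: good_ops ops_f[unfolded Dh1_def] XX_Dh1[unfolded Dh1_def])
lemma relDh2: "s \<in> T \<Longrightarrow> Dh2 n (C s) = - (\<Sum>t\<in>{t\<in>T. (case t of (a, b, e) \<Rightarrow> (a, b - 1, e + 1)) = s}. sc (case t of (a, b, e) \<Rightarrow> of_nat b) (C t))"
  unfolding Dh2_def by (rule rel) (auto simp: good_ops ops_f[unfolded Dh2_def] XX_Dh2[unfolded Dh2_def])
lemma relDh3: "s \<in> T \<Longrightarrow> Dh3 n (C s) = - (\<Sum>t\<in>{t\<in>T. (case t of (a, b, e) \<Rightarrow> (a - 1, b, e + 1)) = s}. sc (case t of (a, b, e) \<Rightarrow> of_nat a) (C t))"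
  unfolding Dh3_def by (rule rel) (auto simp: good_ops ops_f[unfolded Dh3_def] XX_Dh3[unfolded Dh3_def])
lemma relE1: "s \<in> T \<Longrightarrow> E1 n (C s) = - (\<Sum>t\<in>{t\<in>T. t = s}. sc (case t of (a, b, e) \<Rightarrow> of_int (int a - int b)) (C t))"
  unfolding E1_def by (rule rel) (auto simp: good_ops ops_f[unfolded E1_def] XX_E1[unfolded E1_def])
lemma relE2: "s \<in> T \<Longrightarrow> E2 n (C s) = - (\<Sum>t\<in>{t\<in>T. t = s}. sc (case t of (a, b, e) \<Rightarrow> of_int (int b - int e)) (C t))"
  unfolding E2_def by (rule rel) (auto simp: good_ops ops_f[unfolded E2_def] XX_E2[unfolded E2_def])

lemma Dh3_step:
  assumes "i < d"
  shows "Dh3 n (C (i, 0, d - i)) = - sc (of_nat (Suc i)) (C (Suc i, 0, d - Suc i))"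
proof -
  have "{t\<in>T. (case t of (a, b, e) \<Rightarrow> (a - 1, b, e + 1)) = (i, 0, d - i)} = {(Suc i, 0, d - Suc i)}"
    using assms by (auto simp: Tset_def)
  note S = this
  have T1: "(i, 0, d - i) \<in> T" using assms by (simp add: Tset_def)
  show ?thesis using relDh3[OF T1] unfolding S by simp
qed

lemma Dh2_step:
  assumes "i + j < d"
  shows "Dh2 n (C (i, j, d - (i + j))) = - sc (of_nat (Suc j)) (C (i, Suc j, d - (i + Suc j)))"
proof -
  have "{t\<in>T. (case t of (a, b, e) \<Rightarrow> (a, b - 1, e + 1)) = (i, j, d - (i + j))} = {(i, Suc j, d - (i + Suc j))}"
  proof (rule filt_single)
    fix a' b' e' assume "(a', b', e') \<in> T" "(case (a', b', e') of (a, b, e) \<Rightarrow> (a, b - 1, e + 1)) = (i, j, d - (i + j))"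
    then show "(a', b', e') = (i, Suc j, d - (i + Suc j))" using assms unfolding Tset_def
      by (simp only: prod.case prod.inject mem_Collect_eq) arith
  next
    show "(i, Suc j, d - (i + Suc j)) \<in> T" using assms by (simp add: Tset_def)
  next
    show "(case (i, Suc j, d - (i + Suc j)) of (a, b, e) \<Rightarrow> (a, b - 1, e + 1)) = (i, j, d - (i + j))" using assms by simp
  qed
  note S = this
  have T1: "(i, j, d - (i + j)) \<in> T" using assms by (simp add: Tset_def)
  show ?thesis using relDh2[OF T1] unfolding S by simp
qed

lemma D2_val:
  assumes "(a, b, e) \<in> T"
  shows "D2 n (C (a, b, e)) = (if b = 0 then 0 else - sc (of_nat (Suc e)) (C (a, b - 1, Suc e)))"
proof (cases "b = 0")
  case True
  then have "{t\<in>T. (case t of (a, b, e) \<Rightarrow> (a, b + 1, e - 1)) = (a, b, e)} = {}"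
    by auto
  note S = this
  show ?thesis using relD2[OF assms] True unfolding S by simp
next
  case False
  have "{t\<in>T. (case t of (a, b, e) \<Rightarrow> (a, b + 1, e - 1)) = (a, b, e)} = {(a, b - 1, Suc e)}"
  proof (rule filt_single)
    fix a' b' e' assume "(a', b', e') \<in> T" "(case (a', b', e') of (a, b, e) \<Rightarrow> (a, b + 1, e - 1)) = (a, b, e)"
    then show "(a', b', e') = (a, b - 1, Suc e)" using assms False unfolding Tset_def
      by (simp only: prod.case prod.inject mem_Collect_eq) arith
  next
    show "(a, b - 1, Suc e) \<in> T" using assms False by (simp add: Tset_def)
  next
    show "(case (a, b - 1, Suc e) of (a, b, e) \<Rightarrow> (a, b + 1, e - 1)) = (a, b, e)" using assms False by simp
  qed
  note S = this
  show ?thesis using relD2[OF assms] False unfolding S by simp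
qed

lemma D3_val:
  assumes "(a, b, e) \<in> T"
  shows "D3 n (C (a, b, e)) = (if a = 0 then 0 else - sc (of_nat (Suc e)) (C (a - 1, b, Suc e)))"
proof (cases "a = 0")
  case True
  then have "{t\<in>T. (case t of (a, b, e) \<Rightarrow> (a + 1, b, e - 1)) = (a, b, e)} = {}"
    by auto
  note S = this
  show ?thesis using relD3[OF assms] True unfolding S by simp
next
  case False
  have "{t\<in>T. (case t of (a, b, e) \<Rightarrow> (a + 1, b, e - 1)) = (a, b, e)} = {(a - 1, b, Suc e)}"
  proof (rule filt_single)
    fix a' b' e' assume "(a', b', e') \<in> T" "(case (a', b', e') of (a, b, e) \<Rightarrow> (a + 1, b, e - 1)) = (a, b, e)"
    then show "(a', b', e') = (a - 1, b, Suc e)" using assms False unfolding Tset_def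
      by (simp only: prod.case prod.inject mem_Collect_eq) arith
  next
    show "(a - 1, b, Suc e) \<in> T" using assms False by (simp add: Tset_def)
  next
    show "(case (a - 1, b, Suc e) of (a, b, e) \<Rightarrow> (a + 1, b, e - 1)) = (a, b, e)" using assms False by simp
  qed
  note S = this
  show ?thesis using relD3[OF assms] False unfolding S by simp
qed

lemma D1_0:
  assumes "(0, b, e) \<in> T"
  shows "D1 n (C (0, b, e)) = 0"
proof -
  have "{t\<in>T. (case t of (a, b, e) \<Rightarrow> (a + 1, b - 1, e)) = (0, b, e)} = {}"
    by auto
  note S = this
  show ?thesis using relD1[OF assms] unfolding S by simp
qed

lemma E1_val:
  assumes "(a, b, e) \<in> T"
  shows "E1 n (C (a, b, e)) = sc (of_nat b - of_nat a) (C (a, b, e))"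
proof -
  have S: "{t\<in>T. t = (a, b, e)} = {(a, b, e)}" using assms by auto
  show ?thesis using relE1[OF assms] unfolding S by (simp add: sc_neg[symmetric])
qed

lemma E2_val:
  assumes "(a, b, e) \<in> T"
  shows "E2 n (C (a, b, e)) = sc (of_nat e - of_nat b) (C (a, b, e))"
proof -
  have S: "{t\<in>T. t = (a, b, e)} = {(a, b, e)}" using assms by auto
  show ?thesis using relE2[OF assms] unfolding S by (simp add: sc_neg[symmetric])
qed

end


lemma ops_sc:
  "D1 n (sc a p) = sc a (D1 n p)" "D2 n (sc a p) = sc a (D2 n p)" "D3 n (sc a p) = sc a (D3 n p)"
  "Dh1 n (sc a p) = sc a (Dh1 n p)" "Dh2 n (sc a p) = sc a (Dh2 n p)" "Dh3 n (sc a p) = sc a (Dh3 n p)"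
  "E1 n (sc a p) = sc a (E1 n p)" "E2 n (sc a p) = sc a (E2 n p)"
  by (simp_all add: D1_def D2_def D3_def Dh1_def Dh2_def Dh3_def E1_def E2_def der_sc)

lemma Dh2_funpow_sc: "(Dh2 n ^^ j) (sc a p) = sc a ((Dh2 n ^^ j) p)"
  by (simp add: Dh2_def der_funpow_sc)

lemma sc_uminus_right': "sc a (- sc b p) = sc (- (a * b)) p"
  by (simp add: sc_uminus_right sc_neg)

context thm6
begin

lemma Dh3_pow: "i \<le> d \<Longrightarrow> (Dh3 n ^^ i) (C (0, 0, d)) = sc ((-1) ^ i * fact i) (C (i, 0, d - i))"
proof (induction i)
  case 0 then show ?case by simp
next
  case (Suc i)
  then have "(Dh3 n ^^ Suc i) (C (0, 0, d)) = sc ((-1) ^ i * fact i) (Dh3 n (C (i, 0, d - i)))"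
    by (simp add: ops_sc)
  also have "\<dots> = sc ((-1) ^ Suc i * fact (Suc i)) (C (Suc i, 0, d - Suc i))"
    using Suc.prems by (simp add: Dh3_step sc_uminus_right' algebra_simps)
  finally show ?case .
qed

lemma Dh2_pow: "i + j \<le> d \<Longrightarrow> (Dh2 n ^^ j) (C (i, 0, d - i)) = sc ((-1) ^ j * fact j) (C (i, j, d - (i + j)))"
proof (induction j)
  case 0 then show ?case by simp
next
  case (Suc j)
  then have "(Dh2 n ^^ Suc j) (C (i, 0, d - i)) = sc ((-1) ^ j * fact j) (Dh2 n (C (i, j, d - (i + j))))"
    by (simp add: ops_sc)
  also have "\<dots> = sc ((-1) ^ Suc j * fact (Suc j)) (C (i, Suc j, d - (i + Suc j)))"
    using Suc.prems by (simp add: Dh2_step sc_uminus_right' algebra_simps)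
  finally show ?case .
qed

lemma c00: "c 0 0 = C (0, 0, d)"
  by (simp add: CC_def NN_00)

lemma C_formula:
  assumes "i + j \<le> d"
  shows "C (i, j, d - (i + j)) = sc ((-1) ^ (i + j) / (fact i * fact j)) ((Dh2 n ^^ j) ((Dh3 n ^^ i) (c 0 0)))"
proof -
  have "(Dh2 n ^^ j) ((Dh3 n ^^ i) (c 0 0)) = sc ((-1) ^ i * fact i * ((-1) ^ j * fact j)) (C (i, j, d - (i + j)))"
    using assms by (simp add: c00 Dh3_pow Dh2_pow Dh2_funpow_sc)
  moreover have "((-1) ^ (i + j) / (fact i * fact j)) * ((-1) ^ i * fact i * ((-1) ^ j * fact j)) = (1::'k)"
  proof -
    have "((-1::'k) ^ (i + j)) * ((-1) ^ i * (-1) ^ j) = 1"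
      by (simp add: power_add[symmetric] power_mult_distrib[symmetric] mult_2[symmetric] power_mult[symmetric])
    then show ?thesis by (simp add: field_simps)
  qed
  ultimately show ?thesis by simp
qed

lemma f_iii:
  "f = (\<Sum>i\<le>d. \<Sum>j\<le>d - i.
                sc ((-1) ^ (i + j) / (fact i * fact j))
                   ((Dh2 n ^^ j) ((Dh3 n ^^ i) (c 0 0)) * uu 3 ^ (d - (i + j)) * uu 1 ^ i * uu 2 ^ j))"
  unfolding f_def
proof (intro sum.cong refl)
  fix i j assume "i \<in> {..d}" "j \<in> {..d - i}"
  then have ij: "i + j \<le> d" by auto
  have "sc (fact d / (fact i * fact j * fact (d - (i + j)))) (c i j * uu 3 ^ (d - (i + j)) * uu 1 ^ i * uu 2 ^ j)
      = C (i, j, d - (i + j)) * uu 3 ^ (d - (i + j)) * uu 1 ^ i * uu 2 ^ j"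
    by (simp add: CC_def NN_def sc_mult_left)
  also have "\<dots> = sc ((-1) ^ (i + j) / (fact i * fact j))
                   ((Dh2 n ^^ j) ((Dh3 n ^^ i) (c 0 0)) * uu 3 ^ (d - (i + j)) * uu 1 ^ i * uu 2 ^ j)"
    unfolding C_formula[OF ij] by (simp add: sc_mult_left)
  finally show "sc (fact d / (fact i * fact j * fact (d - (i + j)))) (c i j * uu 3 ^ (d - (i + j)) * uu 1 ^ i * uu 2 ^ j) =
         sc ((-1) ^ (i + j) / (fact i * fact j))
                   ((Dh2 n ^^ j) ((Dh3 n ^^ i) (c 0 0)) * uu 3 ^ (d - (i + j)) * uu 1 ^ i * uu 2 ^ j)" .
qed

lemma c00_nz: assumes "f \<noteq> 0" shows "c 0 0 \<noteq> 0"
proof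
  assume h: "c 0 0 = 0"
  have "f = 0"
    by (subst f_iii) (simp add: h Dh2_def Dh3_def der_funpow_zero)
  with assms show False by simp
qed

end

lemma funpow_closed: "(\<And>p. p \<in> W \<Longrightarrow> D p \<in> W) \<Longrightarrow> p \<in> W \<Longrightarrow> (D ^^ k) p \<in> W"
  by (induction k) auto

context thm6
begin

abbreviation "G \<equiv> {c i j | i j. i + j \<le> d}"
abbreviation "V \<equiv> kspan G"

lemma V_sub: "subspace_pol V"
  by (rule kspan_subspace)

lemma G_V: "i + j \<le> d \<Longrightarrow> c i j \<in> V"
  using kspan_sup[of G] by blast

lemma C_in_V: "t \<in> T \<Longrightarrow> C t \<in> V"
proof -
  assume "t \<in> T"
  then obtain a b e where t: "t = (a, b, e)" "a + b \<le> d" by (cases t) (auto simp: Tset_def)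
  then show "C t \<in> V" unfolding t CC_def by (auto intro!: subspace_sc[OF V_sub] G_V)
qed

lemma c_from_C: "i + j \<le> d \<Longrightarrow> c i j = sc (inverse (NN d i j)) (C (i, j, d - (i + j)))"
  by (simp add: CC_def NN_nz)

lemma V_repr: "p \<in> V \<Longrightarrow> \<exists>\<mu>. p = (\<Sum>t\<in>T. sc (\<mu> t) (C t))"
proof -
  define W where "W = {p. \<exists>\<mu>. p = (\<Sum>t\<in>T. sc (\<mu> t) (C t))}"
  have "subspace_pol W"
    unfolding subspace_pol_def
  proof (intro conjI ballI allI)
    show "0 \<in> W" unfolding W_def by (intro CollectI exI[of _ "\<lambda>_. 0"]) simp
  next
    fix p q assume "p \<in> W" "q \<in> W"
    then obtain \<mu>1 \<mu>2 where "p = (\<Sum>t\<in>T. sc (\<mu>1 t) (C t))" "q = (\<Sum>t\<in>T. sc (\<mu>2 t) (C t))"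
      by (auto simp: W_def)
    then have "p + q = (\<Sum>t\<in>T. sc (\<mu>1 t + \<mu>2 t) (C t))" by (simp add: sc_add_left sum.distrib)
    then show "p + q \<in> W" by (auto simp: W_def)
  next
    fix a p assume "p \<in> W"
    then obtain \<mu> where "p = (\<Sum>t\<in>T. sc (\<mu> t) (C t))" by (auto simp: W_def)
    then have "sc a p = (\<Sum>t\<in>T. sc (a * \<mu> t) (C t))" by (simp add: sc_sum)
    then show "sc a p \<in> W" by (auto simp: W_def)
  qed
  moreover have "G \<subseteq> W"
  proof
    fix q assume "q \<in> G"
    then obtain i j where ij: "q = c i j" "i + j \<le> d" by auto
    define t0 where "t0 = (i, j, d - (i + j))"
    have t0T: "t0 \<in> T" using ij by (simp add: t0_def Tset_def)
    have "(\<Sum>t\<in>T. sc (if t = t0 then inverse (NN d i j) else 0) (C t)) = (\<Sum>t\<in>T. if t = t0 then sc (inverse (NN d i j)) (C t) else 0)"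
      by (rule sum.cong) auto
    also have "\<dots> = sc (inverse (NN d i j)) (C t0)"
      by (rule trans[OF sum.delta[OF finite_Tset]]) (simp add: t0T)
    also have "\<dots> = q" using ij by (simp add: c_from_C t0_def)
    finally have "q = (\<Sum>t\<in>T. sc (if t = t0 then inverse (NN d i j) else 0) (C t))" by simp
    then have "\<exists>\<mu>. q = (\<Sum>t\<in>T. sc (\<mu> t) (C t))" by (intro exI[of _ "\<lambda>t. if t = t0 then inverse (NN d i j) else 0"])
    then show "q \<in> W" unfolding W_def by (rule CollectI)
  qed
  ultimately have "V \<subseteq> W" by (rule kspan_least)
  then show "p \<in> V \<Longrightarrow> \<exists>\<mu>. p = (\<Sum>t\<in>T. sc (\<mu> t) (C t))" by (auto simp: W_def)
qed

lemma V_KA: "V \<subseteq> KA n"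
  by (rule kspan_least[OF KA_subspace]) (auto intro: cA)

lemma neg_sum_in_V: "A \<subseteq> T \<Longrightarrow> - (\<Sum>t\<in>A. sc (\<kappa> t) (C t)) \<in> V"
  by (intro subspace_uminus[OF V_sub] subspace_sum[OF V_sub] subspace_sc[OF V_sub] C_in_V) auto

lemma der_closed:
  assumes "\<forall>t\<in>T. der \<delta> (C t) \<in> V" "p \<in> V"
  shows "der \<delta> p \<in> V"
proof -
  obtain \<mu> where "p = (\<Sum>t\<in>T. sc (\<mu> t) (C t))" using V_repr[OF assms(2)] by blast
  then have "der \<delta> p = (\<Sum>t\<in>T. sc (\<mu> t) (der \<delta> (C t)))" by (simp add: der_sum der_sc)
  also have "\<dots> \<in> V" using assms(1) by (intro subspace_sum[OF V_sub] subspace_sc[OF V_sub]) auto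
  finally show ?thesis .
qed

lemma V_closed: "D \<in> sl3_ops n \<Longrightarrow> p \<in> V \<Longrightarrow> D p \<in> V"
  unfolding sl3_ops_def
  apply (elim insertE; simp only: empty_iff)
  subgoal by (simp only: D1_def, rule der_closed) (auto simp: relD1[unfolded D1_def] intro!: neg_sum_in_V)
  subgoal by (simp only: D2_def, rule der_closed) (auto simp: relD2[unfolded D2_def] intro!: neg_sum_in_V)
  subgoal by (simp only: D3_def, rule der_closed) (auto simp: relD3[unfolded D3_def] intro!: neg_sum_in_V)
  subgoal by (simp only: Dh1_def, rule der_closed) (auto simp: relDh1[unfolded Dh1_def] intro!: neg_sum_in_V)
  subgoal by (simp only: Dh2_def, rule der_closed) (auto simp: relDh2[unfolded Dh2_def] intro!: neg_sum_in_V)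
  subgoal by (simp only: Dh3_def, rule der_closed) (auto simp: relDh3[unfolded Dh3_def] intro!: neg_sum_in_V)
  subgoal by (simp only: E1_def, rule der_closed) (auto simp: relE1[unfolded E1_def] intro!: neg_sum_in_V)
  subgoal by (simp only: E2_def, rule der_closed) (auto simp: relE2[unfolded E2_def] intro!: neg_sum_in_V)
  done

lemma V_submodule: "sl3_submodule n V"
  unfolding sl3_submodule_def using V_KA V_sub V_closed by blast

end

lemma D2_funpow_sc: "(D2 n ^^ j) (sc a p) = sc a ((D2 n ^^ j) p)"
  by (simp add: D2_def der_funpow_sc)
lemma D3_funpow_sc: "(D3 n ^^ j) (sc a p) = sc a ((D3 n ^^ j) p)"
  by (simp add: D3_def der_funpow_sc)
lemma D3_funpow_zero: "(D3 n ^^ j) 0 = 0"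
  by (simp add: D3_def der_funpow_zero)
lemma D2_funpow_zero: "(D2 n ^^ j) 0 = 0"
  by (simp add: D2_def der_funpow_zero)
lemma D2_zero: "D2 n 0 = 0" by (simp add: D2_def)
lemma D3_zero: "D3 n 0 = 0" by (simp add: D3_def)

context thm6
begin

lemma D2_pow:
  assumes "(a, b, e) \<in> T" "k \<le> b"
  shows "\<exists>\<kappa>. \<kappa> \<noteq> 0 \<and> (D2 n ^^ k) (C (a, b, e)) = sc \<kappa> (C (a, b - k, e + k))"
  using assms(2)
proof (induction k)
  case 0 then show ?case by (intro exI[of _ 1]) simp
next
  case (Suc k)
  then obtain \<kappa> where k: "\<kappa> \<noteq> 0" "(D2 n ^^ k) (C (a, b, e)) = sc \<kappa> (C (a, b - k, e + k))" by auto
  have mem: "(a, b - k, e + k) \<in> T" using assms(1) Suc.prems by (simp add: Tset_def)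
  have "(D2 n ^^ Suc k) (C (a, b, e)) = sc \<kappa> (D2 n (C (a, b - k, e + k)))"
    using k by (simp add: ops_sc)
  also have "\<dots> = sc (- (\<kappa> * of_nat (Suc (e + k)))) (C (a, b - Suc k, e + Suc k))"
    using Suc.prems by (simp add: D2_val[OF mem] sc_uminus_right')
  moreover have "(of_nat (Suc (e + k)) :: 'k) \<noteq> 0" by (rule of_nat_neq_0)
  ultimately show ?case using k(1) by (intro exI[of _ "- (\<kappa> * of_nat (Suc (e + k)))"]) simp
qed

lemma D3_pow:
  assumes "(a, b, e) \<in> T" "k \<le> a"
  shows "\<exists>\<kappa>. \<kappa> \<noteq> 0 \<and> (D3 n ^^ k) (C (a, b, e)) = sc \<kappa> (C (a - k, b, e + k))"
  using assms(2)
proof (induction k)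
  case 0 then show ?case by (intro exI[of _ 1]) simp
next
  case (Suc k)
  then obtain \<kappa> where k: "\<kappa> \<noteq> 0" "(D3 n ^^ k) (C (a, b, e)) = sc \<kappa> (C (a - k, b, e + k))" by auto
  have mem: "(a - k, b, e + k) \<in> T" using assms(1) Suc.prems by (simp add: Tset_def)
  have "(D3 n ^^ Suc k) (C (a, b, e)) = sc \<kappa> (D3 n (C (a - k, b, e + k)))"
    using k by (simp add: ops_sc)
  also have "\<dots> = sc (- (\<kappa> * of_nat (Suc (e + k)))) (C (a - Suc k, b, e + Suc k))"
    using Suc.prems by (simp add: D3_val[OF mem] sc_uminus_right')
  moreover have "(of_nat (Suc (e + k)) :: 'k) \<noteq> 0" by (rule of_nat_neq_0)
  ultimately show ?case using k(1) by (intro exI[of _ "- (\<kappa> * of_nat (Suc (e + k)))"]) simp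
qed

lemma D2_pow0:
  assumes "(a, b, e) \<in> T" "b < k"
  shows "(D2 n ^^ k) (C (a, b, e)) = 0"
  using assms(2)
proof (induction k)
  case 0 then show ?case by simp
next
  case (Suc k)
  show ?case
  proof (cases "b < k")
    case True
    then show ?thesis using Suc.IH by (simp add: D2_zero)
  next
    case False
    then have kb: "k = b" using Suc.prems by simp
    obtain \<kappa> where k: "(D2 n ^^ k) (C (a, b, e)) = sc \<kappa> (C (a, 0, e + b))"
      using D2_pow[OF assms(1), of k] kb by auto
    have mem: "(a, 0, e + b) \<in> T" using assms(1) by (simp add: Tset_def)
    show ?thesis using k by (simp add: ops_sc D2_val[OF mem])
  qed
qed

lemma D3_pow0:
  assumes "(a, b, e) \<in> T" "a < k"
  shows "(D3 n ^^ k) (C (a, b, e)) = 0"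
  using assms(2)
proof (induction k)
  case 0 then show ?case by simp
next
  case (Suc k)
  show ?case
  proof (cases "a < k")
    case True
    then show ?thesis using Suc.IH by (simp add: D3_zero)
  next
    case False
    then have kb: "k = a" using Suc.prems by simp
    obtain \<kappa> where k: "(D3 n ^^ k) (C (a, b, e)) = sc \<kappa> (C (0, b, e + a))"
      using D3_pow[OF assms(1), of k] kb by auto
    have mem: "(0, b, e + a) \<in> T" using assms(1) by (simp add: Tset_def)
    show ?thesis using k by (simp add: ops_sc D3_val[OF mem])
  qed
qed

lemma all_C_in:
  assumes Wsub: "sl3_submodule n W" and C0: "C (0, 0, d) \<in> W"
  shows "V \<subseteq> W"
proof (rule kspan_least)
  show sW: "subspace_pol W" using Wsub by (simp add: sl3_submodule_def)
  have cl: "\<And>D p. D \<in> sl3_ops n \<Longrightarrow> p \<in> W \<Longrightarrow> D p \<in> W" using Wsub by (simp add: sl3_submodule_def)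
  show "G \<subseteq> W"
  proof
    fix q assume "q \<in> G"
    then obtain i j where ij: "q = c i j" "i + j \<le> d" by auto
    have c0W: "c 0 0 \<in> W" using C0 by (simp add: c00)
    have h3: "(Dh3 n ^^ i) (c 0 0) \<in> W"
      by (rule funpow_closed[of W, OF _ c0W]) (auto simp: sl3_ops_def intro: cl)
    have "(Dh2 n ^^ j) ((Dh3 n ^^ i) (c 0 0)) \<in> W"
      by (rule funpow_closed[of W, OF _ h3]) (auto simp: sl3_ops_def intro: cl)
    then have "C (i, j, d - (i + j)) \<in> W"
      unfolding C_formula[OF ij(2)] by (rule subspace_sc[OF sW])
    then show "q \<in> W" unfolding ij c_from_C[OF ij(2)] by (rule subspace_sc[OF sW])
  qed
qed

lemma V_irred:
  assumes "W \<subseteq> V" "sl3_submodule n W" "W \<noteq> {0}"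
  shows "W = V"
proof -
  have sW: "subspace_pol W" using assms(2) by (simp add: sl3_submodule_def)
  have cl: "\<And>D p. D \<in> sl3_ops n \<Longrightarrow> p \<in> W \<Longrightarrow> D p \<in> W" using assms(2) by (simp add: sl3_submodule_def)
  obtain w where w: "w \<in> W" "w \<noteq> 0" using assms(3) sW by (auto simp: subspace_pol_def)
  obtain \<mu> where wmu: "w = (\<Sum>t\<in>T. sc (\<mu> t) (C t))" using V_repr w(1) assms(1) by blast
  define S where "S = {t\<in>T. \<mu> t \<noteq> 0}"
  have "S \<noteq> {}"
  proof
    assume "S = {}"
    then have "w = (\<Sum>t\<in>T. 0)" unfolding wmu by (intro sum.cong) (auto simp: S_def)
    with w show False by simp
  qed
  have finS: "finite S" using finite_Tset by (simp add: S_def)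
  define m where "m = Min ((\<lambda>t. snd (snd t)) ` S)"
  have "m \<in> (\<lambda>t. snd (snd t)) ` S" unfolding m_def using finS \<open>S \<noteq> {}\<close> by (intro Min_in) auto
  then obtain i0 j0 k0 where t0S: "(i0, j0, k0) \<in> S" and k0m: "k0 = m" by auto
  have minS: "\<And>a b e. (a, b, e) \<in> S \<Longrightarrow> k0 \<le> e"
    unfolding k0m m_def using finS by (metis Min_le finite_imageI image_eqI snd_conv)
  have t0T: "(i0, j0, k0) \<in> T" and mu0: "\<mu> (i0, j0, k0) \<noteq> 0" using t0S by (auto simp: S_def)
  then have d0: "i0 + j0 + k0 = d" by (simp add: Tset_def)
  define \<Phi> where "\<Phi> p = (D3 n ^^ i0) ((D2 n ^^ j0) p)" for p :: "'k pol"
  have PhiW: "\<Phi> p \<in> W" if "p \<in> W" for p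
    unfolding \<Phi>_def using that
    by (intro funpow_closed[of W] ; auto simp: sl3_ops_def intro: cl)
  obtain \<kappa>1 where k1: "\<kappa>1 \<noteq> 0" "(D2 n ^^ j0) (C (i0, j0, k0)) = sc \<kappa>1 (C (i0, 0, k0 + j0))"
    using D2_pow[OF t0T, of j0] by auto
  have mem1: "(i0, 0, k0 + j0) \<in> T" using d0 by (simp add: Tset_def)
  obtain \<kappa>2 where k2: "\<kappa>2 \<noteq> 0" "(D3 n ^^ i0) (C (i0, 0, k0 + j0)) = sc \<kappa>2 (C (0, 0, k0 + j0 + i0))"
    using D3_pow[OF mem1, of i0] by auto
  have Phi0: "\<Phi> (C (i0, j0, k0)) = sc (\<kappa>1 * \<kappa>2) (C (0, 0, d))"
    unfolding \<Phi>_def k1(2) D3_funpow_sc k2(2) using d0 by (simp add: add.commute add.left_commute mult.commute)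
  have Phi_other: "sc (\<mu> t) (\<Phi> (C t)) = 0" if "t \<in> T" "t \<noteq> (i0, j0, k0)" for t
  proof (cases "\<mu> t = 0")
    case False
    obtain a b e where t: "t = (a, b, e)" by (cases t) auto
    have tS: "(a, b, e) \<in> S" using False that t by (simp add: S_def)
    have tT: "(a, b, e) \<in> T" using that t by simp
    show ?thesis
    proof (cases "b < j0")
      case True
      then show ?thesis unfolding t \<Phi>_def by (simp add: D2_pow0[OF tT] D3_funpow_zero)
    next
      case False
      then obtain \<kappa> where kk: "(D2 n ^^ j0) (C (a, b, e)) = sc \<kappa> (C (a, b - j0, e + j0))"
        using D2_pow[OF tT, of j0] by auto
      have mem: "(a, b - j0, e + j0) \<in> T" using tT False by (simp add: Tset_def)
      have "a < i0"
      proof (rule ccontr)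
        assume "\<not> a < i0"
        moreover have "k0 \<le> e" using minS[OF tS] .
        moreover have "a + b + e = d" using tT by (simp add: Tset_def)
        ultimately have "a = i0" "b = j0" "e = k0" using False d0 by linarith+
        then show False using that t by simp
      qed
      then show ?thesis unfolding t \<Phi>_def kk D3_funpow_sc by (simp add: D3_pow0[OF mem])
    qed
  qed simp
  have "\<Phi> w = (\<Sum>t\<in>T. sc (\<mu> t) (\<Phi> (C t)))"
    unfolding wmu \<Phi>_def by (simp add: D2_def D3_def der_funpow_sum der_funpow_sc)
  also have "\<dots> = sc (\<mu> (i0, j0, k0)) (\<Phi> (C (i0, j0, k0)))"
  proof -
    have "(\<Sum>t\<in>T. sc (\<mu> t) (\<Phi> (C t))) = (\<Sum>t\<in>T. if t = (i0, j0, k0) then sc (\<mu> t) (\<Phi> (C t)) else 0)"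
      by (rule sum.cong) (auto simp: Phi_other)
    also have "\<dots> = sc (\<mu> (i0, j0, k0)) (\<Phi> (C (i0, j0, k0)))"
      by (rule trans[OF sum.delta[OF finite_Tset]]) (simp add: t0T)
    finally show ?thesis .
  qed
  finally have "\<Phi> w = sc (\<mu> (i0, j0, k0) * (\<kappa>1 * \<kappa>2)) (C (0, 0, d))"
    by (simp add: Phi0)
  then have "C (0, 0, d) = sc (inverse (\<mu> (i0, j0, k0) * (\<kappa>1 * \<kappa>2))) (\<Phi> w)"
    using mu0 k1(1) k2(1) by (simp del: inverse_mult_distrib)
  also have "\<dots> \<in> W" using PhiW[OF w(1)] by (rule subspace_sc[OF sW])
  finally have "V \<subseteq> W" using all_C_in[OF assms(2)] by blast
  with assms(1) show ?thesis by blast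
qed

end

theorem mainTheorem6:
  fixes n d :: nat and f :: "'k::field_char_0 pol" and c :: "nat \<Rightarrow> nat \<Rightarrow> 'k pol"
  assumes "n \<ge> 1"
    and cA: "\<And>i j. i + j \<le> d \<Longrightarrow> c i j \<in> KA n"
    and f_def: "f = (\<Sum>i\<le>d. \<Sum>j\<le>d - i.
                   sc (fact d / (fact i * fact j * fact (d - (i + j))))
                      (c i j * uu 3 ^ (d - (i + j)) * uu 1 ^ i * uu 2 ^ j))"
    and irr: "irreducible_contravariant n d f"
  shows "is_Gamma n 0 d (kspan {c i j | i j. i + j \<le> d})
       \<and> c 0 0 \<in> kspan {c i j | i j. i + j \<le> d} \<and> highest_vector n 0 d (c 0 0)
       \<and> f = (\<Sum>i\<le>d. \<Sum>j\<le>d - i.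
                sc ((-1) ^ (i + j) / (fact i * fact j))
                   ((Dh2 n ^^ j) ((Dh3 n ^^ i) (c 0 0)) * uu 3 ^ (d - (i + j)) * uu 1 ^ i * uu 2 ^ j))"
proof -
  have contra: "contravariant n d f" and fnz: "f \<noteq> 0"
    using irr by (simp_all add: irreducible_contravariant_def)
  interpret thm6 n d f c
    by unfold_locales (use cA f_def contra in auto)
  have c0nz: "c 0 0 \<noteq> 0" by (rule c00_nz[OF fnz])
  have T0: "(0, 0, d) \<in> T" by (simp add: Tset_def)
  have hv: "highest_vector n 0 d (c 0 0)"
    unfolding highest_vector_def c00
    using c0nz[unfolded c00] T0
    by (simp add: D1_0 D2_val E1_val E2_val D3_val sc_of_nat)
  have c0V: "c 0 0 \<in> V" by (rule G_V) simp
  have finG: "finite G"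
  proof -
    have "G \<subseteq> (\<lambda>(i, j). c i j) ` ({..d} \<times> {..d})" by force
    then show ?thesis by (rule finite_subset) auto
  qed
  have V0: "V \<noteq> {0}" using c0V c0nz by blast
  have irrV: "irreducible_sl3_submodule n V"
    unfolding irreducible_sl3_submodule_def
    using V_submodule V0 V_irred by blast
  have "is_Gamma n 0 d V"
    unfolding is_Gamma_def using finG irrV c0V hv by blast
  then show ?thesis using c0V hv f_iii by blast
qed

end
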